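(* Let $\mathfrak{X}$ be a connected complex analytic manifold with base point $z^*$ such that $H=H_1(\mathfrak{X};\mathbb{Z}_2)$ is finite, of order $2^s$, and let $k,q\ge0$. Then $\widehat{\mathcal{F}}^q_k$ coincides with the space of all $q$-forms $\theta\in\mathcal{A}^q(\widetilde{\mathfrak{X}})$ admitting a decomposition $\theta=\sum_{\rho\in H^*}\theta_\rho$ such that $\mathrm{Var}^\rho_\gamma\theta_\rho\in\widehat{\mathcal{F}}^q_{k-1}$ for all $\gamma\in\pi$ and all $\rho\in H^*$. Moreover, if $\theta\in\widehat{\mathcal{F}}^q_k$, one can take $$\theta_\rho=\frac{1}{2^s}\sum_{j=1}^{2^s}(-1)^{\rho(\gamma_j)}M_{\gamma_j}\theta,$$ where $\gamma_1=1,\gamma_2,\dots,\gamma_{2^s}\in\pi$ are representatives of all $2^s$ cosets $\pi/\hat\pi$.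
   Context: $\widetilde{\mathfrak{X}}$ is the universal covering, $\pi=\pi_1(\mathfrak{X},z^* )$ acting by deck transformations $T_\gamma$; $\mathcal{A}^q(\widetilde{\mathfrak{X}})$ is the space of holomorphic $q$-forms on $\widetilde{\mathfrak{X}}$; $M_\gamma\theta=T_\gamma^*\theta$, $\mathrm{Var}_\gamma\theta=M_\gamma\theta-\theta$. $H^*=H^1(\mathfrak{X};\mathbb{Z}_2)=\mathrm{Hom}(\pi,\mathbb{Z}_2)$. For $\rho\in H^*$ the twisted variation is $\mathrm{Var}^\rho_\gamma\theta=M_\gamma\theta-(-1)^{\rho(\gamma)}\theta$. $\hat\pi$ is the kernel of $\pi\to H$, and $\widehat{\mathcal{F}}^q_{-1}=\{0\}$, $\widehat{\mathcal{F}}^q_k=\{\theta:\mathrm{Var}_\gamma\theta\in\widehat{\mathcal{F}}^q_{k-1}\ \forall\gamma\in\hat\pi\}$. *)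

theory Defs
  imports "HOL-Analysis.Analysis" "HOL-Algebra.Algebra"
begin

(* Abstract algebraic rendering of the setting:
   G     : the fundamental group pi = pi_1(X, z* ) (HOL-Algebra group),
   'v    : the complex vector space A^q of holomorphic q-forms on the universal
           cover, with complex scalar multiplication sc,
   M g   : the pull-back M_gamma = T_gamma^* by the deck transformation. *)

definition pullback_rep ::
  "('g, 'm) monoid_scheme \<Rightarrow> (complex \<Rightarrow> 'v::ab_group_add \<Rightarrow> 'v) \<Rightarrow> ('g \<Rightarrow> 'v \<Rightarrow> 'v) \<Rightarrow> bool" where
  "pullback_rep G sc M \<longleftrightarrow>
     (\<forall>g\<in>carrier G. Vector_Spaces.linear sc sc (M g)) \<and>
     M \<one>\<^bsub>G\<^esub> = id \<and>
     (\<forall>g\<in>carrier G. \<forall>h\<in>carrier G. M (g \<otimes>\<^bsub>G\<^esub> h) = M h \<circ> M g)"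

(* \<hat>\<pi> = kernel of pi -> H = H_1(X;Z_2) = pi / ([pi,pi] pi^2) (Hurewicz mod 2):
   the subgroup generated by all squares and commutators. *)
definition hatpi :: "('g, 'm) monoid_scheme \<Rightarrow> 'g set" where
  "hatpi G = generate G
     ({x \<otimes>\<^bsub>G\<^esub> x | x. x \<in> carrier G} \<union>
      {x \<otimes>\<^bsub>G\<^esub> y \<otimes>\<^bsub>G\<^esub> inv\<^bsub>G\<^esub> x \<otimes>\<^bsub>G\<^esub> inv\<^bsub>G\<^esub> y | x y. x \<in> carrier G \<and> y \<in> carrier G})"

(* H^* = Hom(pi, Z_2); Z_2 = (bool, xor); extensional (False off the carrier) *)
definition dualH :: "('g, 'm) monoid_scheme \<Rightarrow> ('g \<Rightarrow> bool) set" where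
  "dualH G = {\<rho>. (\<forall>x\<in>carrier G. \<forall>y\<in>carrier G. \<rho> (x \<otimes>\<^bsub>G\<^esub> y) = (\<rho> x \<noteq> \<rho> y))
                 \<and> (\<forall>x. x \<notin> carrier G \<longrightarrow> \<not> \<rho> x)}"

definition sgnZ2 :: "bool \<Rightarrow> complex" where
  "sgnZ2 b = (if b then -1 else 1)"

definition Var :: "('g \<Rightarrow> 'v \<Rightarrow> 'v) \<Rightarrow> 'g \<Rightarrow> 'v::ab_group_add \<Rightarrow> 'v" where
  "Var M g \<theta> = M g \<theta> - \<theta>"

definition VarTw :: "(complex \<Rightarrow> 'v \<Rightarrow> 'v) \<Rightarrow> ('g \<Rightarrow> 'v \<Rightarrow> 'v) \<Rightarrow> ('g \<Rightarrow> bool) \<Rightarrow> 'g \<Rightarrow> 'v::ab_group_add \<Rightarrow> 'v" where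
  "VarTw sc M \<rho> g \<theta> = M g \<theta> - sc (sgnZ2 (\<rho> g)) \<theta>"

(* Ffilt G M n = \<hat>F^q_{n-1}; i.e. Ffilt G M 0 = \<hat>F_{-1} = {0},
   Ffilt G M (Suc k) = \<hat>F_k *)
fun Ffilt :: "('g, 'm) monoid_scheme \<Rightarrow> ('g \<Rightarrow> 'v \<Rightarrow> 'v) \<Rightarrow> nat \<Rightarrow> 'v::ab_group_add set" where
  "Ffilt G M 0 = {0}"
| "Ffilt G M (Suc k) = {\<theta>. \<forall>g\<in>hatpi G. Var M g \<theta> \<in> Ffilt G M k}"

end

theory Submission
  imports Defs
begin

locale L3 = group G + vector_space sc
  for G :: "('g,'m) monoid_scheme" (structure) and sc :: "complex \<Rightarrow> 'v::ab_group_add \<Rightarrow> 'v" +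
  fixes M :: "'g \<Rightarrow> 'v \<Rightarrow> 'v"
  assumes rep: "pullback_rep G sc M"
begin

abbreviation "N \<equiv> hatpi G"

lemma N_sub: "subgroup N G"
  unfolding hatpi_def
proof (rule generate_is_subgroup)
  show "{x \<otimes> x |x. x \<in> carrier G} \<union>
    {x \<otimes> y \<otimes> inv x \<otimes> inv y |x y. x \<in> carrier G \<and> y \<in> carrier G} \<subseteq> carrier G"
    by (auto simp del: inv_mult_group)
qed

lemma N_carr: "x \<in> N \<Longrightarrow> x \<in> carrier G"
  by (rule subgroup.mem_carrier[OF N_sub])

lemma lc1 [simp]: "x \<in> carrier G \<Longrightarrow> y \<in> carrier G \<Longrightarrow> inv x \<otimes> (x \<otimes> y) = y"
  by (simp add: m_assoc[symmetric])
lemma lc2 [simp]: "x \<in> carrier G \<Longrightarrow> y \<in> carrier G \<Longrightarrow> x \<otimes> (inv x \<otimes> y) = y"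
  by (simp add: m_assoc[symmetric])

lemma sq_N: assumes "x \<in> carrier G" shows "x \<otimes> x \<in> N"
  unfolding hatpi_def
  by (rule generate.incl, rule UnI1, rule CollectI, rule exI[of _ x], rule conjI, rule refl, rule assms)

lemma comm_N: assumes "x \<in> carrier G" "y \<in> carrier G" shows "x \<otimes> y \<otimes> inv x \<otimes> inv y \<in> N"
  unfolding hatpi_def
  by (rule generate.incl, rule UnI2, rule CollectI, rule exI[of _ x], rule exI[of _ y], rule conjI, rule refl, rule conjI, rule assms(1), rule assms(2))

lemma commute_N: assumes "a \<in> carrier G" "b \<in> carrier G"
  shows "\<exists>c\<in>N. a \<otimes> b = c \<otimes> b \<otimes> a"
proof
  show "a \<otimes> b \<otimes> inv a \<otimes> inv b \<in> N" using comm_N assms by blast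
  show "a \<otimes> b = a \<otimes> b \<otimes> inv a \<otimes> inv b \<otimes> b \<otimes> a" using assms
    by (simp add: m_assoc)
qed

lemma conj_N: assumes "g \<in> carrier G" "h \<in> N" shows "g \<otimes> h \<otimes> inv g \<in> N"
proof -
  have hc: "h \<in> carrier G" using N_carr assms by blast
  have "g \<otimes> h \<otimes> inv g = (g \<otimes> h \<otimes> inv g \<otimes> inv h) \<otimes> h" using assms hc by (simp add: m_assoc)
  thus ?thesis using comm_N[OF assms(1) hc] assms(2) N_sub subgroup.m_closed by metis
qed

lemma dual_mult: "\<rho> \<in> dualH G \<Longrightarrow> x \<in> carrier G \<Longrightarrow> y \<in> carrier G \<Longrightarrow> \<rho> (x \<otimes> y) = (\<rho> x \<noteq> \<rho> y)"
  unfolding dualH_def by simp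

lemma dual_one: assumes "\<rho> \<in> dualH G" shows "\<not> \<rho> \<one>"
proof -
  have "\<rho> (\<one> \<otimes> \<one>) = (\<rho> \<one> \<noteq> \<rho> \<one>)" using dual_mult[OF assms one_closed one_closed] .
  thus ?thesis by simp
qed

lemma dual_inv: assumes "\<rho> \<in> dualH G" "x \<in> carrier G" shows "\<rho> (inv x) = \<rho> x"
proof -
  have "\<rho> (x \<otimes> inv x) = (\<rho> x \<noteq> \<rho> (inv x))" using dual_mult[OF assms(1) assms(2) inv_closed[OF assms(2)]] .
  thus ?thesis using dual_one[OF assms(1)] assms(2) by simp
qed

lemma dual_gen: assumes "\<rho> \<in> dualH G"
  and "h \<in> {x \<otimes> x |x. x \<in> carrier G} \<union>
      {x \<otimes> y \<otimes> inv x \<otimes> inv y |x y. x \<in> carrier G \<and> y \<in> carrier G}"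
  shows "\<not> \<rho> h \<and> h \<in> carrier G"
proof -
  from assms(2) consider x where "x \<in> carrier G" "h = x \<otimes> x"
    | x y where "x \<in> carrier G" "y \<in> carrier G" "h = x \<otimes> y \<otimes> inv x \<otimes> inv y" by blast
  thus ?thesis
  proof cases
    case 1 thus ?thesis by (simp add: dual_mult[OF assms(1)])
  next
    case 2
    have "\<rho> h = (((\<rho> x \<noteq> \<rho> y) \<noteq> \<rho> x) \<noteq> \<rho> y)"
      using 2 by (simp add: dual_mult[OF assms(1)] dual_inv[OF assms(1)])
    hence "\<not> \<rho> h" by (cases "\<rho> x"; cases "\<rho> y") simp_all
    thus ?thesis using 2 by simp
  qed
qed

lemma dual_N: assumes "\<rho> \<in> dualH G" "h \<in> N" shows "\<not> \<rho> h"
  using assms(2) unfolding hatpi_def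
proof (induction rule: generate.induct)
  case one thus ?case using dual_one[OF assms(1)] by simp
next
  case (incl h) show ?case using dual_gen[OF assms(1) incl] by simp
next
  case (inv h)
  have a: "\<not> \<rho> h" "h \<in> carrier G" using dual_gen[OF assms(1) inv] by auto
  show ?case using dual_inv[OF assms(1) a(2)] a(1) by simp
next
  case (eng h1 h2)
  have c: "h1 \<in> carrier G" "h2 \<in> carrier G" by (rule N_carr[unfolded hatpi_def], fact)+
  show ?case using eng.IH dual_mult[OF assms(1) c] by simp
qed

lemma M_hom: "g \<in> carrier G \<Longrightarrow> module_hom sc sc (M g)"
  using rep by (simp add: pullback_rep_def module_hom_iff_linear)

lemma M_one: "M \<one> = id" using rep by (simp add: pullback_rep_def)

lemma M_mult: "g \<in> carrier G \<Longrightarrow> h \<in> carrier G \<Longrightarrow> M (g \<otimes> h) = M h \<circ> M g"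
  using rep by (simp add: pullback_rep_def)

lemma M_add: "g \<in> carrier G \<Longrightarrow> M g (x + y) = M g x + M g y"
  using M_hom module_hom.add by blast
lemma M_diff: "g \<in> carrier G \<Longrightarrow> M g (x - y) = M g x - M g y"
  using M_hom module_hom.diff by blast
lemma M_scale: "g \<in> carrier G \<Longrightarrow> M g (sc c x) = sc c (M g x)"
  using M_hom module_hom.scale by blast
lemma M_zero: "g \<in> carrier G \<Longrightarrow> M g 0 = 0"
  using M_hom module_hom.zero by blast
lemma M_sum: "g \<in> carrier G \<Longrightarrow> M g (sum f A) = (\<Sum>a\<in>A. M g (f a))"
  using M_hom module_hom.sum by blast

lemma F_zero: "0 \<in> Ffilt G M n"
  by (induction n) (auto simp: Var_def N_carr M_zero)

lemma F_add: "x \<in> Ffilt G M n \<Longrightarrow> y \<in> Ffilt G M n \<Longrightarrow> x + y \<in> Ffilt G M n"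
proof (induction n arbitrary: x y)
  case 0 thus ?case by simp
next
  case (Suc n)
  { fix g assume g: "g \<in> N"
    have "Var M g (x + y) = Var M g x + Var M g y"
      using g N_carr by (simp add: Var_def M_add algebra_simps)
    hence "Var M g (x + y) \<in> Ffilt G M n" using Suc g by simp }
  thus ?case by simp
qed

lemma F_scale: "x \<in> Ffilt G M n \<Longrightarrow> sc c x \<in> Ffilt G M n"
proof (induction n arbitrary: x)
  case 0 thus ?case by simp
next
  case (Suc n)
  { fix g assume g: "g \<in> N"
    have "Var M g (sc c x) = sc c (Var M g x)"
      using g N_carr by (simp add: Var_def M_scale scale_right_diff_distrib)
    hence "Var M g (sc c x) \<in> Ffilt G M n" using Suc g by simp }
  thus ?case by simp
qed

lemma F_diff: "x \<in> Ffilt G M n \<Longrightarrow> y \<in> Ffilt G M n \<Longrightarrow> x - y \<in> Ffilt G M n"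
proof -
  assume a: "x \<in> Ffilt G M n" "y \<in> Ffilt G M n"
  have "x - y = x + sc (-1) y" by simp
  thus ?thesis using a F_add F_scale by metis
qed

lemma F_sum: "(\<And>a. a \<in> A \<Longrightarrow> f a \<in> Ffilt G M n) \<Longrightarrow> sum f A \<in> Ffilt G M n"
  by (induction A rule: infinite_finite_induct) (auto simp: F_zero F_add)

lemma F_M: "g \<in> carrier G \<Longrightarrow> x \<in> Ffilt G M n \<Longrightarrow> M g x \<in> Ffilt G M n"
proof (induction n arbitrary: x)
  case 0 thus ?case by (simp add: M_zero)
next
  case (Suc n)
  { fix h assume h: "h \<in> N"
    have hc: "h \<in> carrier G" using h N_carr by blast
    define h' where "h' = g \<otimes> h \<otimes> inv g"
    have h'N: "h' \<in> N" using conj_N Suc h h'_def by blast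
    have h'c: "h' \<in> carrier G" using h'N N_carr by blast
    have "g \<otimes> h = h' \<otimes> g" using Suc hc by (simp add: h'_def m_assoc)
    hence "M h (M g x) = M g (M h' x)" using M_mult Suc hc h'c by (metis comp_apply)
    hence "Var M h (M g x) = M g (Var M h' x)" using Suc by (simp add: Var_def M_diff)
    moreover have "Var M h' x \<in> Ffilt G M n" using Suc h'N by simp
    ultimately have "Var M h (M g x) \<in> Ffilt G M n" using Suc by simp }
  thus ?case by simp
qed

lemma partA:
  assumes "\<theta> = (\<Sum>\<rho>\<in>dualH G. \<Theta> \<rho>)"
    and "\<forall>\<rho>\<in>dualH G. \<forall>g\<in>carrier G. VarTw sc M \<rho> g (\<Theta> \<rho>) \<in> Ffilt G M k"
  shows "\<theta> \<in> Ffilt G M (Suc k)"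
proof -
  { fix g assume g: "g \<in> N"
    have gc: "g \<in> carrier G" using g N_carr by blast
    have "Var M g \<theta> = (\<Sum>\<rho>\<in>dualH G. Var M g (\<Theta> \<rho>))"
      using gc by (simp add: assms(1) Var_def M_sum sum_subtractf)
    also have "\<dots> = (\<Sum>\<rho>\<in>dualH G. VarTw sc M \<rho> g (\<Theta> \<rho>))"
      using dual_N g by (intro sum.cong) (auto simp: Var_def VarTw_def sgnZ2_def)
    also have "\<dots> \<in> Ffilt G M k" using assms(2) gc by (intro F_sum) auto
    finally have "Var M g \<theta> \<in> Ffilt G M k" . }
  thus ?thesis by simp
qed

lemma coset_subgroup:
  assumes H: "subgroup H G" "N \<subseteq> H" and x: "x \<in> carrier G"
  shows "subgroup (H \<union> (H #> x)) G"
proof -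
  have Hc: "\<And>h. h \<in> H \<Longrightarrow> h \<in> carrier G" by (rule subgroup.mem_carrier[OF H(1)])
  have Hm: "\<And>a b. a \<in> H \<Longrightarrow> b \<in> H \<Longrightarrow> a \<otimes> b \<in> H" by (rule subgroup.m_closed[OF H(1)])
  have Hi: "\<And>a. a \<in> H \<Longrightarrow> inv a \<in> H" by (rule subgroup.m_inv_closed[OF H(1)])
  have mem: "\<And>z. z \<in> H #> x \<longleftrightarrow> (\<exists>h\<in>H. z = h \<otimes> x)" unfolding r_coset_def by blast
  show ?thesis
  proof (rule subgroupI)
    show "H \<union> (H #> x) \<subseteq> carrier G" using Hc x mem by auto
    show "H \<union> (H #> x) \<noteq> {}" using subgroup.one_closed[OF H(1)] by blast
  next
    fix a assume "a \<in> H \<union> (H #> x)"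
    then consider "a \<in> H" | h where "h \<in> H" "a = h \<otimes> x" using mem by blast
    thus "inv a \<in> H \<union> (H #> x)"
    proof cases
      case 1 thus ?thesis using Hi by blast
    next
      case 2
      have hc: "h \<in> carrier G" using 2 Hc by blast
      obtain c where c: "c \<in> N" "x \<otimes> inv h = c \<otimes> inv h \<otimes> x"
        using commute_N[of x "inv h"] x hc by auto
      have cc: "c \<in> carrier G" using c N_carr by blast
      have "inv a = inv x \<otimes> inv h" using 2 hc x by (simp add: inv_mult_group)
      also have "\<dots> = (inv x \<otimes> inv x) \<otimes> (x \<otimes> inv h)" using hc x by (simp add: m_assoc)
      also have "\<dots> = ((inv x \<otimes> inv x) \<otimes> c \<otimes> inv h) \<otimes> x" using c hc x cc by (simp add: m_assoc)
      finally have "inv a = ((inv x \<otimes> inv x) \<otimes> c \<otimes> inv h) \<otimes> x" .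
      moreover have "(inv x \<otimes> inv x) \<otimes> c \<otimes> inv h \<in> H"
      proof -
        have a1: "inv x \<otimes> inv x \<in> H" using sq_N[of "inv x"] x H(2) by auto
        have a2: "c \<in> H" using c H(2) by auto
        show ?thesis using Hm[OF Hm[OF a1 a2] Hi[OF 2(1)]] .
      qed
      ultimately show ?thesis using mem by blast
    qed
  next
    fix a b assume "a \<in> H \<union> (H #> x)" "b \<in> H \<union> (H #> x)"
    then consider "a \<in> H" "b \<in> H" | h2 where "a \<in> H" "h2 \<in> H" "b = h2 \<otimes> x"
      | h1 where "h1 \<in> H" "a = h1 \<otimes> x" "b \<in> H"
      | h1 h2 where "h1 \<in> H" "a = h1 \<otimes> x" "h2 \<in> H" "b = h2 \<otimes> x" using mem by blast
    thus "a \<otimes> b \<in> H \<union> (H #> x)"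
    proof cases
      case 1 thus ?thesis using Hm by blast
    next
      case 2
      hence "a \<otimes> b = (a \<otimes> h2) \<otimes> x" using Hc x by (simp add: m_assoc)
      thus ?thesis using 2 Hm mem by blast
    next
      case 3
      have bc: "b \<in> carrier G" using 3 Hc by blast
      obtain c where c: "c \<in> N" "x \<otimes> b = c \<otimes> b \<otimes> x"
        using commute_N[of x b] x bc by auto
      have cc: "c \<in> carrier G" using c N_carr by blast
      have "a \<otimes> b = h1 \<otimes> (x \<otimes> b)" using 3 Hc x bc by (simp add: m_assoc)
      also have "\<dots> = (h1 \<otimes> c \<otimes> b) \<otimes> x" using c 3 Hc x bc cc by (simp add: m_assoc)
      finally have "a \<otimes> b = (h1 \<otimes> c \<otimes> b) \<otimes> x" .
      moreover have "h1 \<otimes> c \<otimes> b \<in> H" using 3 c H by (intro Hm) auto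
      ultimately show ?thesis using mem by blast
    next
      case 4
      have h2c: "h2 \<in> carrier G" "h1 \<in> carrier G" using 4 Hc by auto
      obtain c where c: "c \<in> N" "x \<otimes> h2 = c \<otimes> h2 \<otimes> x"
        using commute_N[of x h2] x h2c by auto
      have cc: "c \<in> carrier G" using c N_carr by blast
      have "a \<otimes> b = h1 \<otimes> (x \<otimes> h2) \<otimes> x" using 4 h2c x by (simp add: m_assoc)
      also have "\<dots> = h1 \<otimes> c \<otimes> h2 \<otimes> (x \<otimes> x)" using c h2c x cc by (simp add: m_assoc)
      finally have "a \<otimes> b = h1 \<otimes> c \<otimes> h2 \<otimes> (x \<otimes> x)" .
      moreover have "h1 \<otimes> c \<otimes> h2 \<otimes> (x \<otimes> x) \<in> H"
      proof -
        have a1: "x \<otimes> x \<in> H" using sq_N[OF x] H(2) by auto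
        have a2: "c \<in> H" using c H(2) by auto
        show ?thesis using Hm[OF Hm[OF Hm[OF 4(1) a2] 4(3)] a1] .
      qed
      ultimately show ?thesis by simp
    qed
  qed
qed

lemma separation:
  assumes fin: "finite (rcosets N)" and g: "g \<in> carrier G" "g \<notin> N"
  shows "\<exists>\<rho>\<in>dualH G. \<rho> g"
proof -
  define Fam where "Fam = {H. subgroup H G \<and> N \<subseteq> H \<and> g \<notin> H}"
  have Fsub: "Fam \<subseteq> Union ` Pow (rcosets N)"
  proof
    fix H assume H: "H \<in> Fam"
    have Hsg: "subgroup H G" "N \<subseteq> H" using H unfolding Fam_def by auto
    have "H = \<Union>{c\<in>rcosets N. c \<subseteq> H}"
    proof
      show "H \<subseteq> \<Union>{c\<in>rcosets N. c \<subseteq> H}"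
      proof
        fix x assume x: "x \<in> H"
        have xc: "x \<in> carrier G" by (rule subgroup.mem_carrier[OF Hsg(1) x])
        have "N #> x \<subseteq> H"
        proof
          fix y assume "y \<in> N #> x"
          then obtain n where n: "n \<in> N" "y = n \<otimes> x" unfolding r_coset_def by blast
          have "n \<in> H" using n(1) Hsg(2) by blast
          thus "y \<in> H" using n(2) subgroup.m_closed[OF Hsg(1) _ x] by simp
        qed
        moreover have "N #> x \<in> rcosets N" by (rule rcosetsI[OF subgroup.subset[OF N_sub] xc])
        moreover have "x \<in> N #> x" using rcos_self[OF xc N_sub] .
        ultimately show "x \<in> \<Union>{c\<in>rcosets N. c \<subseteq> H}" by blast
      qed
    qed blast
    thus "H \<in> Union ` Pow (rcosets N)" by blast
  qed
  have finF: "finite Fam"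
    by (rule finite_subset[OF Fsub finite_imageI[OF finite_Pow_iff[THEN iffD2, OF fin]]])
  have "N \<in> Fam" using N_sub g unfolding Fam_def by blast
  then obtain H where H: "H \<in> Fam" and Hmax: "\<forall>B\<in>Fam. H \<subseteq> B \<longrightarrow> H = B"
    using finite_has_maximal[OF finF] by blast
  have Hs: "subgroup H G" "N \<subseteq> H" "g \<notin> H" using H unfolding Fam_def by auto
  have Hc: "\<And>h. h \<in> H \<Longrightarrow> h \<in> carrier G" by (rule subgroup.mem_carrier[OF Hs(1)])
  have Hm: "\<And>a b. a \<in> H \<Longrightarrow> b \<in> H \<Longrightarrow> a \<otimes> b \<in> H" by (rule subgroup.m_closed[OF Hs(1)])
  have Hi: "\<And>a. a \<in> H \<Longrightarrow> inv a \<in> H" by (rule subgroup.m_inv_closed[OF Hs(1)])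
  have key: "\<exists>h\<in>H. g = h \<otimes> x" if x: "x \<in> carrier G" "x \<notin> H" for x
  proof -
    have sg: "subgroup (H \<union> (H #> x)) G" using coset_subgroup Hs x by blast
    have "x \<in> H #> x" using rcos_self[OF x(1) Hs(1)] .
    hence "H \<noteq> H \<union> (H #> x)" using x by blast
    hence "H \<union> (H #> x) \<notin> Fam" using Hmax by blast
    hence "g \<in> H \<union> (H #> x)" using sg Hs unfolding Fam_def by blast
    thus ?thesis using Hs unfolding r_coset_def by blast
  qed
  define \<rho> where "\<rho> x = (x \<in> carrier G \<and> x \<notin> H)" for x
  have "\<rho> \<in> dualH G"
    unfolding dualH_def
  proof (intro CollectI conjI ballI allI impI)
    fix x y assume x: "x \<in> carrier G" and y: "y \<in> carrier G"
    show "\<rho> (x \<otimes> y) = (\<rho> x \<noteq> \<rho> y)"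
    proof (cases "x \<in> H"; cases "y \<in> H")
      assume "x \<in> H" "y \<in> H" thus ?thesis using Hm x y by (simp add: \<rho>_def)
    next
      assume a: "x \<in> H" "y \<notin> H"
      have "x \<otimes> y \<notin> H"
      proof
        assume "x \<otimes> y \<in> H"
        hence "inv x \<otimes> (x \<otimes> y) \<in> H" using a Hm Hi by blast
        thus False using a x y by (simp add: m_assoc[symmetric])
      qed
      thus ?thesis using a x y by (simp add: \<rho>_def)
    next
      assume a: "x \<notin> H" "y \<in> H"
      have "x \<otimes> y \<notin> H"
      proof
        assume "x \<otimes> y \<in> H"
        hence "(x \<otimes> y) \<otimes> inv y \<in> H" using a Hm Hi by blast
        thus False using a x y by (simp add: m_assoc)
      qed
      thus ?thesis using a x y by (simp add: \<rho>_def)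
    next
      assume a: "x \<notin> H" "y \<notin> H"
      obtain h1 where h1: "h1 \<in> H" "g = h1 \<otimes> x" using key x a by blast
      obtain h2 where h2: "h2 \<in> H" "g = h2 \<otimes> y" using key y a by blast
      have hc: "h1 \<in> carrier G" "h2 \<in> carrier G" using h1 h2 Hc by auto
      have xe: "x = inv h1 \<otimes> g" using h1 hc x by (simp add: m_assoc[symmetric])
      have ye: "y = inv h2 \<otimes> g" using h2 hc y by (simp add: m_assoc[symmetric])
      obtain c where c: "c \<in> N" "g \<otimes> inv h2 = c \<otimes> inv h2 \<otimes> g"
        using commute_N[of g "inv h2"] g hc by auto
      have cc: "c \<in> carrier G" using c N_carr by blast
      have "x \<otimes> y = inv h1 \<otimes> (g \<otimes> inv h2) \<otimes> g" using xe ye hc g by (simp add: m_assoc)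
      also have "\<dots> = inv h1 \<otimes> c \<otimes> inv h2 \<otimes> (g \<otimes> g)" using c hc g cc by (simp add: m_assoc)
      finally have "x \<otimes> y = inv h1 \<otimes> c \<otimes> inv h2 \<otimes> (g \<otimes> g)" .
      moreover have "inv h1 \<otimes> c \<otimes> inv h2 \<otimes> (g \<otimes> g) \<in> H"
      proof -
        have a1: "g \<otimes> g \<in> H" using sq_N[OF g(1)] Hs(2) by auto
        have a2: "c \<in> H" using c Hs(2) by auto
        show ?thesis using Hm[OF Hm[OF Hm[OF Hi[OF h1(1)] a2] Hi[OF h2(1)]] a1] .
      qed
      ultimately show ?thesis using a x y by (simp add: \<rho>_def)
    qed
  qed (simp add: \<rho>_def)
  moreover have "\<rho> g" using g Hs by (simp add: \<rho>_def)
  ultimately show ?thesis by blast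
qed

lemma exists_gs:
  assumes fin: "finite (rcosets N)" and card: "card (rcosets N) = 2 ^ s"
  shows "\<exists>gs. gs 0 = \<one> \<and> (\<forall>j<(2::nat) ^ s. gs j \<in> carrier G) \<and>
    inj_on (\<lambda>j. N #> gs j) {..<(2::nat) ^ s} \<and> (\<lambda>j. N #> gs j) ` {..<(2::nat) ^ s} = rcosets N"
proof -
  let ?n = "(2::nat) ^ s"
  have "\<exists>h. bij_betw h {0..<card (rcosets N)} (rcosets N)" by (rule ex_bij_betw_nat_finite[OF fin])
  then obtain f where f: "bij_betw f {0..<?n} (rcosets N)" unfolding card ..
  have f': "bij_betw f {..<?n} (rcosets N)" using f by (simp add: atLeast0LessThan)
  have NN: "N #> \<one> = N" by (rule coset_mult_one[OF subgroup.subset[OF N_sub]])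
  have "N #> \<one> \<in> rcosets N" by (rule rcosetsI[OF subgroup.subset[OF N_sub] one_closed])
  hence "N \<in> f ` {..<?n}" using f' NN unfolding bij_betw_def by simp
  then obtain i0 where i0: "i0 \<in> {..<?n}" "N = f i0" by (rule imageE)
  define p where "p j = (if j = 0 then i0 else if j = i0 then 0 else j)" for j :: nat
  have p: "bij_betw p {..<?n} {..<?n}"
    by (rule bij_betw_byWitness[where f' = p]) (use i0 in \<open>auto simp: p_def\<close>)
  define F where "F = f \<circ> p"
  have F: "bij_betw F {..<?n} (rcosets N)" unfolding F_def by (rule bij_betw_trans[OF p f'])
  have F0: "F 0 = N" using i0 by (simp add: F_def p_def)
  have Fex: "\<exists>x. x \<in> carrier G \<and> F j = N #> x" if "j < ?n" for j
  proof -
    have "F j \<in> rcosets N" using F that unfolding bij_betw_def by auto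
    thus ?thesis unfolding RCOSETS_def by blast
  qed
  define gs where "gs j = (if j = 0 then \<one> else SOME x. x \<in> carrier G \<and> F j = N #> x)" for j
  have gsp: "gs j \<in> carrier G \<and> N #> gs j = F j" if "j < ?n" for j
  proof (cases "j = 0")
    case True thus ?thesis using F0 NN by (simp add: gs_def)
  next
    case False
    have "gs j \<in> carrier G \<and> F j = N #> gs j"
      unfolding gs_def using False someI_ex[OF Fex[OF that]] by simp
    thus ?thesis by simp
  qed
  have "inj_on (\<lambda>j. N #> gs j) {..<?n} = inj_on F {..<?n}"
    by (rule inj_on_cong) (use gsp in simp)
  hence "inj_on (\<lambda>j. N #> gs j) {..<?n}" using F unfolding bij_betw_def by simp
  moreover have "(\<lambda>j. N #> gs j) ` {..<?n} = rcosets N"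
  proof -
    have "(\<lambda>j. N #> gs j) ` {..<?n} = F ` {..<?n}" using gsp by (intro image_cong) auto
    thus ?thesis using F unfolding bij_betw_def by simp
  qed
  moreover have "gs 0 = \<one>" by (simp add: gs_def)
  moreover have "\<forall>j<(2::nat) ^ s. gs j \<in> carrier G" using gsp by simp
  ultimately show ?thesis by (intro exI[of _ gs]) simp
qed

end

locale L3b = L3 +
  fixes s :: nat and gs :: "nat \<Rightarrow> 'a"
  assumes fin: "finite (rcosets\<^bsub>G\<^esub> (hatpi G))"
    and gs0: "gs 0 = \<one>\<^bsub>G\<^esub>"
    and gsc: "\<And>j. j < 2 ^ s \<Longrightarrow> gs j \<in> carrier G"
    and gsinj: "inj_on (\<lambda>j. hatpi G #>\<^bsub>G\<^esub> gs j) {..<2 ^ s}"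
    and gsim: "(\<lambda>j. hatpi G #>\<^bsub>G\<^esub> gs j) ` {..<2 ^ s} = rcosets\<^bsub>G\<^esub> (hatpi G)"
begin

abbreviation "n \<equiv> (2::nat) ^ s"

lemma cover: assumes x: "x \<in> carrier G" shows "\<exists>j<n. \<exists>h\<in>N. x = h \<otimes> gs j"
proof -
  have "N #> x \<in> rcosets N" by (rule rcosetsI[OF subgroup.subset[OF N_sub] x])
  hence "N #> x \<in> (\<lambda>j. N #> gs j) ` {..<n}" using gsim by simp
  then obtain j where j0: "j \<in> {..<n}" "N #> x = N #> gs j" by (rule imageE)
  have j: "j < n" "N #> gs j = N #> x" using j0 by auto
  have "x \<in> N #> gs j" using j(2) rcos_self[OF x N_sub] by simp
  then obtain h where "h \<in> N" "x = h \<otimes> gs j" unfolding r_coset_def by blast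
  thus ?thesis using j(1) by blast
qed

lemma same_coset: assumes "j < n" "j' < n" "h \<in> N" "gs j = h \<otimes> gs j'" shows "j = j'"
proof -
  have "gs j \<in> N #> gs j'" using assms(3,4) unfolding r_coset_def by blast
  hence "N #> gs j' = N #> gs j" by (rule repr_independence[OF _ gsc[OF assms(2)] N_sub])
  moreover have "j \<in> {..<n}" "j' \<in> {..<n}" using assms(1,2) by auto
  ultimately show ?thesis using inj_onD[OF gsinj] by metis
qed

lemma gs_notN: assumes "j < n" "j \<noteq> 0" shows "gs j \<notin> N"
proof
  assume a: "gs j \<in> N"
  have "gs j = gs j \<otimes> gs 0" using gsc[OF assms(1)] by (simp add: gs0)
  thus False using same_coset[OF assms(1) _ a, of 0] assms by simp
qed

lemma dual_coset: assumes "\<rho> \<in> dualH G" "h \<in> N" "x \<in> carrier G" shows "\<rho> (h \<otimes> x) = \<rho> x"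
  using dual_mult[OF assms(1) N_carr[OF assms(2)] assms(3)] dual_N[OF assms(1,2)] by simp

lemma sigma: assumes g: "g \<in> carrier G"
  shows "\<exists>\<sigma> hh. bij_betw \<sigma> {..<n} {..<n} \<and> (\<forall>j<n. hh j \<in> N \<and> gs j \<otimes> g = hh j \<otimes> gs (\<sigma> j))"
proof -
  have "\<forall>j. \<exists>p. j < n \<longrightarrow> fst p < n \<and> snd p \<in> N \<and> gs j \<otimes> g = snd p \<otimes> gs (fst p)"
  proof
    fix j show "\<exists>p. j < n \<longrightarrow> fst p < n \<and> snd p \<in> N \<and> gs j \<otimes> g = snd p \<otimes> gs (fst p)"
    proof (cases "j < n")
      case True
      have "gs j \<otimes> g \<in> carrier G" using gsc[OF True] g by simp
      then obtain k hk where khk: "k < n" "hk \<in> N" "gs j \<otimes> g = hk \<otimes> gs k" using cover by blast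
      show ?thesis by (rule exI[of _ "(k, hk)"]) (simp add: khk)
    qed simp
  qed
  hence "\<exists>P. \<forall>j. j < n \<longrightarrow> fst (P j) < n \<and> snd (P j) \<in> N \<and> gs j \<otimes> g = snd (P j) \<otimes> gs (fst (P j))"
    by (rule choice)
  then obtain P where P: "\<forall>j. j < n \<longrightarrow> fst (P j) < n \<and> snd (P j) \<in> N \<and> gs j \<otimes> g = snd (P j) \<otimes> gs (fst (P j))" ..
  define \<sigma> where "\<sigma> j = fst (P j)" for j
  define hh where "hh j = snd (P j)" for j
  have sh: "\<sigma> j < n \<and> hh j \<in> N \<and> gs j \<otimes> g = hh j \<otimes> gs (\<sigma> j)" if "j < n" for j
    unfolding \<sigma>_def hh_def using P that by simp
  have inj: "inj_on \<sigma> {..<n}"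
  proof (rule inj_onI)
    fix j j' assume j: "j \<in> {..<n}" "j' \<in> {..<n}" "\<sigma> j = \<sigma> j'"
    have a: "j < n" "j' < n" using j by auto
    define k where "k = \<sigma> j"
    have e1: "gs j \<otimes> g = hh j \<otimes> gs k" and e2: "gs j' \<otimes> g = hh j' \<otimes> gs k"
      using sh[OF a(1)] sh[OF a(2)] j(3) k_def by auto
    have hN: "hh j \<in> N" "hh j' \<in> N" using sh a by auto
    have hc: "hh j \<in> carrier G" "hh j' \<in> carrier G" using N_carr[OF hN(1)] N_carr[OF hN(2)] by auto
    have kc: "gs k \<in> carrier G" using sh[OF a(1)] k_def gsc by auto
    have jc: "gs j \<in> carrier G" "gs j' \<in> carrier G" using gsc a by auto
    have "gs j \<otimes> g = hh j \<otimes> (inv (hh j') \<otimes> (hh j' \<otimes> gs k))" using e1 hc kc by simp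
    also have "\<dots> = (hh j \<otimes> inv (hh j') \<otimes> gs j') \<otimes> g" using e2 hc kc jc g by (simp add: m_assoc)
    finally have "gs j = hh j \<otimes> inv (hh j') \<otimes> gs j'" using jc hc g by simp
    moreover have "hh j \<otimes> inv (hh j') \<in> N"
      by (rule subgroup.m_closed[OF N_sub hN(1) subgroup.m_inv_closed[OF N_sub hN(2)]])
    ultimately show "j = j'" using same_coset a by blast
  qed
  have "\<sigma> ` {..<n} \<subseteq> {..<n}" using sh by auto
  hence "bij_betw \<sigma> {..<n} {..<n}" using inj endo_inj_surj[of "{..<n}" \<sigma>] by (simp add: bij_betw_def)
  thus ?thesis using sh by blast
qed

lemma sgn_xor: "sgnZ2 (a \<noteq> b) = sgnZ2 a * sgnZ2 b" by (cases a; cases b) (simp_all add: sgnZ2_def)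
lemma sgn_not: "sgnZ2 (\<not> a) = - sgnZ2 a" by (cases a) (simp_all add: sgnZ2_def)
lemma sgn_sq: "sgnZ2 a * sgnZ2 a = 1" by (cases a) (simp_all add: sgnZ2_def)

lemma zero_dual: "(\<lambda>_. False) \<in> dualH G" by (simp add: dualH_def)

lemma dual_ext: assumes "\<rho> \<in> dualH G" "x \<notin> carrier G" shows "\<not> \<rho> x"
  using assms unfolding dualH_def by simp

lemma dual_zero_iff: assumes "\<rho> \<in> dualH G" "\<forall>x\<in>carrier G. \<not> \<rho> x" shows "\<rho> = (\<lambda>_. False)"
proof
  fix x show "\<rho> x = False"
  proof (cases "x \<in> carrier G")
    case True thus ?thesis using assms(2) by simp
  next
    case False thus ?thesis using dual_ext[OF assms(1) False] by simp
  qed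
qed

lemma dual_det: assumes "\<rho> \<in> dualH G" "\<rho>' \<in> dualH G" "\<forall>j<n. \<rho> (gs j) = \<rho>' (gs j)"
  shows "\<rho> = \<rho>'"
proof
  fix x show "\<rho> x = \<rho>' x"
  proof (cases "x \<in> carrier G")
    case True
    then obtain j h where jh: "j < n" "h \<in> N" "x = h \<otimes> gs j" using cover by blast
    have "\<rho> x = \<rho> (gs j)" using jh dual_coset[OF assms(1) jh(2) gsc[OF jh(1)]] by simp
    moreover have "\<rho>' x = \<rho>' (gs j)" using jh dual_coset[OF assms(2) jh(2) gsc[OF jh(1)]] by simp
    ultimately show ?thesis using assms(3) jh(1) by simp
  next
    case False thus ?thesis using dual_ext[OF assms(1) False] dual_ext[OF assms(2) False] by simp
  qed
qed

lemma finD: "finite (dualH G)"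
proof (rule inj_on_finite)
  show "inj_on (\<lambda>\<rho>. restrict (\<rho> \<circ> gs) {..<n}) (dualH G)"
  proof (rule inj_onI)
    fix \<rho> \<rho>' assume a: "\<rho> \<in> dualH G" "\<rho>' \<in> dualH G"
      "restrict (\<rho> \<circ> gs) {..<n} = restrict (\<rho>' \<circ> gs) {..<n}"
    have "\<forall>j<n. \<rho> (gs j) = \<rho>' (gs j)"
    proof (intro allI impI)
      fix j assume "j < n"
      thus "\<rho> (gs j) = \<rho>' (gs j)" using fun_cong[OF a(3), of j] by simp
    qed
    thus "\<rho> = \<rho>'" using dual_det a by blast
  qed
  show "(\<lambda>\<rho>. restrict (\<rho> \<circ> gs) {..<n}) ` dualH G \<subseteq> PiE {..<n} (\<lambda>_. UNIV)" by auto
  show "finite (PiE {..<n} (\<lambda>_. UNIV :: bool set))" by (rule finite_PiE) auto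
qed

lemma orth_j: assumes "\<rho> \<in> dualH G" "x \<in> carrier G" "\<rho> x"
  shows "(\<Sum>j<n. sgnZ2 (\<rho> (gs j))) = 0"
proof -
  obtain \<sigma> hh where sh: "bij_betw \<sigma> {..<n} {..<n}" "\<forall>j<n. hh j \<in> N \<and> gs j \<otimes> x = hh j \<otimes> gs (\<sigma> j)"
    using sigma[OF assms(2)] by blast
  have "(\<Sum>j<n. sgnZ2 (\<rho> (gs j))) = (\<Sum>j<n. sgnZ2 (\<rho> (gs (\<sigma> j))))"
    using sum.reindex_bij_betw[OF sh(1), of "\<lambda>k. sgnZ2 (\<rho> (gs k))"] by simp
  also have "\<dots> = (\<Sum>j<n. - sgnZ2 (\<rho> (gs j)))"
  proof (rule sum.cong)
    fix j assume "j \<in> {..<n}"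
    hence j: "j < n" by simp
    have hj: "hh j \<in> N" "gs j \<otimes> x = hh j \<otimes> gs (\<sigma> j)" using sh(2) j by auto
    have sj: "\<sigma> j < n" using sh(1) j unfolding bij_betw_def by auto
    have "\<rho> (gs (\<sigma> j)) = \<rho> (hh j \<otimes> gs (\<sigma> j))" using dual_coset[OF assms(1) hj(1) gsc[OF sj]] by simp
    also have "\<dots> = \<rho> (gs j \<otimes> x)" using hj(2) by simp
    also have "\<dots> = (\<not> \<rho> (gs j))" using dual_mult[OF assms(1) gsc[OF j] assms(2)] assms(3) by simp
    finally show "sgnZ2 (\<rho> (gs (\<sigma> j))) = - sgnZ2 (\<rho> (gs j))" by (simp add: sgn_not)
  qed simp
  also have "\<dots> = - (\<Sum>j<n. sgnZ2 (\<rho> (gs j)))" by (simp add: sum_negf)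
  finally show ?thesis by simp
qed

lemma tau_dual: assumes "\<rho> \<in> dualH G" "\<rho>0 \<in> dualH G" shows "(\<lambda>x. \<rho> x \<noteq> \<rho>0 x) \<in> dualH G"
  unfolding dualH_def
proof (intro CollectI conjI ballI allI impI)
  fix x y assume xy: "x \<in> carrier G" "y \<in> carrier G"
  have e: "\<rho> (x \<otimes> y) = (\<rho> x \<noteq> \<rho> y)" "\<rho>0 (x \<otimes> y) = (\<rho>0 x \<noteq> \<rho>0 y)"
    using dual_mult[OF assms(1) xy] dual_mult[OF assms(2) xy] by auto
  show "(\<rho> (x \<otimes> y) \<noteq> \<rho>0 (x \<otimes> y)) = ((\<rho> x \<noteq> \<rho>0 x) \<noteq> (\<rho> y \<noteq> \<rho>0 y))"
    unfolding e by (cases "\<rho> x"; cases "\<rho> y"; cases "\<rho>0 x"; cases "\<rho>0 y") simp_all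
next
  fix x assume "x \<notin> carrier G"
  thus "\<not> (\<rho> x \<noteq> \<rho>0 x)" using dual_ext[OF assms(1)] dual_ext[OF assms(2)] by simp
qed

lemma orth_rho_nz: assumes j: "j < n" "j \<noteq> 0"
  shows "(\<Sum>\<rho>\<in>dualH G. sgnZ2 (\<rho> (gs j))) = 0"
proof -
  obtain \<rho>0 where r0: "\<rho>0 \<in> dualH G" "\<rho>0 (gs j)"
    using separation[OF fin gsc[OF j(1)] gs_notN[OF j]] by blast
  define \<tau> where "\<tau> \<rho> = (\<lambda>x. \<rho> x \<noteq> \<rho>0 x)" for \<rho> :: "'a \<Rightarrow> bool"
  have bij: "bij_betw \<tau> (dualH G) (dualH G)"
  proof (rule bij_betw_byWitness[where f' = \<tau>])
    show "\<forall>a\<in>dualH G. \<tau> (\<tau> a) = a" by (auto simp: \<tau>_def fun_eq_iff)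
    show "\<forall>a\<in>dualH G. \<tau> (\<tau> a) = a" by (auto simp: \<tau>_def fun_eq_iff)
    show "\<tau> ` dualH G \<subseteq> dualH G" using tau_dual[OF _ r0(1)] unfolding \<tau>_def by blast
    show "\<tau> ` dualH G \<subseteq> dualH G" using tau_dual[OF _ r0(1)] unfolding \<tau>_def by blast
  qed
  have "(\<Sum>\<rho>\<in>dualH G. sgnZ2 (\<rho> (gs j))) = (\<Sum>\<rho>\<in>dualH G. sgnZ2 (\<tau> \<rho> (gs j)))"
    using sum.reindex_bij_betw[OF bij, of "\<lambda>\<rho>. sgnZ2 (\<rho> (gs j))"] by simp
  also have "\<dots> = (\<Sum>\<rho>\<in>dualH G. - sgnZ2 (\<rho> (gs j)))"
    using r0(2) by (simp add: \<tau>_def sgn_not)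
  also have "\<dots> = - (\<Sum>\<rho>\<in>dualH G. sgnZ2 (\<rho> (gs j)))" by (simp add: sum_negf)
  finally show ?thesis by simp
qed

lemma orth_rho_0: "(\<Sum>\<rho>\<in>dualH G. sgnZ2 (\<rho> (gs 0))) = of_nat (card (dualH G))"
proof -
  have "(\<Sum>\<rho>\<in>dualH G. sgnZ2 (\<rho> (gs 0))) = (\<Sum>\<rho>\<in>dualH G. 1)"
    using dual_one by (intro sum.cong) (simp_all add: gs0 sgnZ2_def)
  thus ?thesis by simp
qed

lemma cardD: "card (dualH G) = n"
proof -
  have A: "(\<Sum>\<rho>\<in>dualH G. \<Sum>j<n. sgnZ2 (\<rho> (gs j))) = of_nat n"
  proof -
    have "(\<Sum>\<rho>\<in>dualH G. \<Sum>j<n. sgnZ2 (\<rho> (gs j)))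
        = (\<Sum>\<rho>\<in>dualH G. if \<rho> = (\<lambda>_. False) then of_nat n else 0)"
    proof (rule sum.cong)
      fix \<rho> assume r: "\<rho> \<in> dualH G"
      show "(\<Sum>j<n. sgnZ2 (\<rho> (gs j))) = (if \<rho> = (\<lambda>_. False) then of_nat n else 0)"
      proof (cases "\<rho> = (\<lambda>_. False)")
        case True thus ?thesis by (simp add: sgnZ2_def)
      next
        case False
        then obtain x where "x \<in> carrier G" "\<rho> x" using dual_zero_iff[OF r] by blast
        thus ?thesis using orth_j[OF r] False by simp
      qed
    qed simp
    also have "\<dots> = of_nat n" using finD zero_dual by (simp add: sum.delta')
    finally show ?thesis .
  qed
  have B: "(\<Sum>j<n. \<Sum>\<rho>\<in>dualH G. sgnZ2 (\<rho> (gs j))) = of_nat (card (dualH G))"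
  proof -
    have "(\<Sum>j<n. \<Sum>\<rho>\<in>dualH G. sgnZ2 (\<rho> (gs j)))
        = (\<Sum>j<n. if j = 0 then of_nat (card (dualH G)) else 0)"
      using orth_rho_nz orth_rho_0 by (intro sum.cong) auto
    also have "\<dots> = of_nat (card (dualH G))" by (simp add: sum.delta')
    finally show ?thesis .
  qed
  have "(\<Sum>\<rho>\<in>dualH G. \<Sum>j<n. sgnZ2 (\<rho> (gs j))) = (\<Sum>j<n. \<Sum>\<rho>\<in>dualH G. sgnZ2 (\<rho> (gs j)))"
    by (rule sum.swap)
  hence "(of_nat (card (dualH G)) :: complex) = of_nat n"
    using A B by simp
  thus ?thesis by (simp only: of_nat_eq_iff)
qed

lemma orth_rho: "j < n \<Longrightarrow> (\<Sum>\<rho>\<in>dualH G. sgnZ2 (\<rho> (gs j))) = (if j = 0 then of_nat n else 0)"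
  using orth_rho_nz orth_rho_0 cardD by auto

lemma partB1:
  "\<theta> = (\<Sum>\<rho>\<in>dualH G. sc (1 / 2 ^ s) (\<Sum>j<2 ^ s. sc (sgnZ2 (\<rho> (gs j))) (M (gs j) \<theta>)))"
proof -
  let ?v = "\<lambda>j. M (gs j) \<theta>"
  have "(\<Sum>\<rho>\<in>dualH G. sc (1 / 2 ^ s) (\<Sum>j<n. sc (sgnZ2 (\<rho> (gs j))) (?v j)))
      = sc (1 / 2 ^ s) (\<Sum>\<rho>\<in>dualH G. \<Sum>j<n. sc (sgnZ2 (\<rho> (gs j))) (?v j))"
    by (simp add: scale_sum_right)
  also have "(\<Sum>\<rho>\<in>dualH G. \<Sum>j<n. sc (sgnZ2 (\<rho> (gs j))) (?v j))
      = (\<Sum>j<n. \<Sum>\<rho>\<in>dualH G. sc (sgnZ2 (\<rho> (gs j))) (?v j))"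
    by (rule sum.swap)
  also have "\<dots> = (\<Sum>j<n. sc (\<Sum>\<rho>\<in>dualH G. sgnZ2 (\<rho> (gs j))) (?v j))"
    by (simp add: scale_sum_left)
  also have "\<dots> = (\<Sum>j<n. if j = 0 then sc (of_nat n) (?v j) else 0)"
    using orth_rho by (intro sum.cong) auto
  also have "\<dots> = sc (of_nat n) (?v 0)" by (simp add: sum.delta')
  also have "?v 0 = \<theta>" by (simp add: gs0 M_one)
  finally have "(\<Sum>\<rho>\<in>dualH G. sc (1 / 2 ^ s) (\<Sum>j<n. sc (sgnZ2 (\<rho> (gs j))) (?v j)))
      = sc (1 / 2 ^ s) (sc (of_nat n) \<theta>)" .
  also have "\<dots> = \<theta>" by simp
  finally show ?thesis by simp
qed

lemma partB2:
  assumes \<theta>: "\<theta> \<in> Ffilt G M (Suc k)" and r: "\<rho> \<in> dualH G" and g: "g \<in> carrier G"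
  shows "VarTw sc M \<rho> g (sc (1 / 2 ^ s) (\<Sum>j<2 ^ s. sc (sgnZ2 (\<rho> (gs j))) (M (gs j) \<theta>)))
           \<in> Ffilt G M k"
proof -
  define c where "c j = sgnZ2 (\<rho> (gs j))" for j
  define v where "v j = M (gs j) \<theta>" for j
  define S where "S = (\<Sum>j<n. sc (c j) (v j))"
  define e where "e = sgnZ2 (\<rho> g)"
  obtain \<sigma> hh where sh: "bij_betw \<sigma> {..<n} {..<n}" "\<forall>j<n. hh j \<in> N \<and> gs j \<otimes> g = hh j \<otimes> gs (\<sigma> j)"
    using sigma[OF g] by blast
  define w where "w j = M (gs (\<sigma> j)) (Var M (hh j) \<theta>)" for j
  define R where "R = (\<Sum>j<n. sc (c j) (w j))"
  have step: "sc (c j) (M g (v j)) = sc e (sc (c (\<sigma> j)) (v (\<sigma> j))) + sc (c j) (w j)" if j: "j < n" for j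
  proof -
    have hj: "hh j \<in> N" "gs j \<otimes> g = hh j \<otimes> gs (\<sigma> j)" using sh(2) j by auto
    have sj: "\<sigma> j < n" using sh(1) j unfolding bij_betw_def by auto
    have hc: "hh j \<in> carrier G" using N_carr[OF hj(1)] .
    have "M g (v j) = M (gs j \<otimes> g) \<theta>" using M_mult[OF gsc[OF j] g] by (simp add: v_def)
    also have "\<dots> = M (gs (\<sigma> j)) (M (hh j) \<theta>)" using hj(2) M_mult[OF hc gsc[OF sj]] by simp
    also have "M (hh j) \<theta> = \<theta> + Var M (hh j) \<theta>" by (simp add: Var_def)
    finally have Mv: "M g (v j) = v (\<sigma> j) + w j" using M_add[OF gsc[OF sj]] by (simp add: v_def w_def)
    have "\<rho> (gs (\<sigma> j)) = \<rho> (hh j \<otimes> gs (\<sigma> j))" using dual_coset[OF r hj(1) gsc[OF sj]] by simp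
    also have "\<dots> = \<rho> (gs j \<otimes> g)" using hj(2) by simp
    also have "\<dots> = (\<rho> (gs j) \<noteq> \<rho> g)" using dual_mult[OF r gsc[OF j] g] .
    finally have X: "\<rho> (gs (\<sigma> j)) = (\<rho> (gs j) \<noteq> \<rho> g)" .
    have "c (\<sigma> j) = c j * e" unfolding c_def e_def X by (rule sgn_xor)
    hence "c j = e * c (\<sigma> j)" using sgn_sq[of "\<rho> g"] by (simp add: e_def algebra_simps)
    thus ?thesis using Mv by (simp add: scale_right_distrib)
  qed
  have "(\<Sum>j<n. sc (c (\<sigma> j)) (v (\<sigma> j))) = S"
    unfolding S_def using sum.reindex_bij_betw[OF sh(1), of "\<lambda>k. sc (c k) (v k)"] by simp
  have MS: "M g S = sc e S + R"
  proof -
    have "M g S = (\<Sum>j<n. sc (c j) (M g (v j)))" unfolding S_def using g by (simp add: M_sum M_scale)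
    also have "\<dots> = (\<Sum>j<n. sc e (sc (c (\<sigma> j)) (v (\<sigma> j))) + sc (c j) (w j))"
      using step by (intro sum.cong) auto
    also have "\<dots> = sc e (\<Sum>j<n. sc (c (\<sigma> j)) (v (\<sigma> j))) + R"
      by (simp add: sum.distrib scale_sum_right R_def)
    also have "(\<Sum>j<n. sc (c (\<sigma> j)) (v (\<sigma> j))) = S"
      unfolding S_def using sum.reindex_bij_betw[OF sh(1), of "\<lambda>k. sc (c k) (v k)"] by simp
    finally show ?thesis .
  qed
  have RF: "R \<in> Ffilt G M k"
    unfolding R_def
  proof (rule F_sum, rule F_scale)
    fix j assume "j \<in> {..<n}"
    hence j: "j < n" by simp
    have sj: "\<sigma> j < n" using sh(1) j unfolding bij_betw_def by auto
    have "Var M (hh j) \<theta> \<in> Ffilt G M k" using \<theta> sh(2) j by simp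
    thus "w j \<in> Ffilt G M k" unfolding w_def by (rule F_M[OF gsc[OF sj]])
  qed
  have "VarTw sc M \<rho> g (sc (1 / 2 ^ s) S) = sc (1 / 2 ^ s) R"
    unfolding VarTw_def using g by (simp add: M_scale MS e_def[symmetric] scale_right_distrib mult.commute)
  moreover have "sc (1 / 2 ^ s) R \<in> Ffilt G M k" by (rule F_scale[OF RF])
  ultimately show ?thesis by (simp add: S_def c_def v_def)
qed

end

theorem lemma3:
  fixes G :: "('g, 'm) monoid_scheme"
    and sc :: "complex \<Rightarrow> 'v::ab_group_add \<Rightarrow> 'v"
    and M :: "'g \<Rightarrow> 'v \<Rightarrow> 'v"
    and s k :: nat
  assumes "group G"
    and "vector_space sc"
    and "pullback_rep G sc M"
    and "finite (rcosets\<^bsub>G\<^esub> (hatpi G))"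
    and "card (rcosets\<^bsub>G\<^esub> (hatpi G)) = 2 ^ s"
  shows "Ffilt G M (Suc k) =
           {\<theta>. \<exists>\<Theta> :: ('g \<Rightarrow> bool) \<Rightarrow> 'v.
                  \<theta> = (\<Sum>\<rho>\<in>dualH G. \<Theta> \<rho>) \<and>
                  (\<forall>\<rho>\<in>dualH G. \<forall>g\<in>carrier G. VarTw sc M \<rho> g (\<Theta> \<rho>) \<in> Ffilt G M k)}
         \<and> (\<forall>\<theta>\<in>Ffilt G M (Suc k). \<forall>gs :: nat \<Rightarrow> 'g.
              gs 0 = \<one>\<^bsub>G\<^esub> \<and> (\<forall>j<2 ^ s. gs j \<in> carrier G) \<and>
              inj_on (\<lambda>j. hatpi G #>\<^bsub>G\<^esub> gs j) {..<2 ^ s} \<and>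
              (\<lambda>j. hatpi G #>\<^bsub>G\<^esub> gs j) ` {..<2 ^ s} = rcosets\<^bsub>G\<^esub> (hatpi G)
              \<longrightarrow>
              (let \<Theta> = (\<lambda>\<rho>. sc (1 / 2 ^ s)
                          (\<Sum>j<2 ^ s. sc (sgnZ2 (\<rho> (gs j))) (M (gs j) \<theta>)))
               in \<theta> = (\<Sum>\<rho>\<in>dualH G. \<Theta> \<rho>) \<and>
                  (\<forall>\<rho>\<in>dualH G. \<forall>g\<in>carrier G. VarTw sc M \<rho> g (\<Theta> \<rho>) \<in> Ffilt G M k)))"
proof -
  interpret L3 G sc M using assms(1-3) by (simp add: L3_def L3_axioms_def)
  have P2: "\<forall>\<theta>\<in>Ffilt G M (Suc k). \<forall>gs :: nat \<Rightarrow> 'g.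
              gs 0 = \<one>\<^bsub>G\<^esub> \<and> (\<forall>j<2 ^ s. gs j \<in> carrier G) \<and>
              inj_on (\<lambda>j. hatpi G #>\<^bsub>G\<^esub> gs j) {..<2 ^ s} \<and>
              (\<lambda>j. hatpi G #>\<^bsub>G\<^esub> gs j) ` {..<2 ^ s} = rcosets\<^bsub>G\<^esub> (hatpi G)
              \<longrightarrow>
              (let \<Theta> = (\<lambda>\<rho>. sc (1 / 2 ^ s)
                          (\<Sum>j<2 ^ s. sc (sgnZ2 (\<rho> (gs j))) (M (gs j) \<theta>)))
               in \<theta> = (\<Sum>\<rho>\<in>dualH G. \<Theta> \<rho>) \<and>
                  (\<forall>\<rho>\<in>dualH G. \<forall>g\<in>carrier G. VarTw sc M \<rho> g (\<Theta> \<rho>) \<in> Ffilt G M k))"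
  proof (intro ballI allI impI)
    fix \<theta> and gs :: "nat \<Rightarrow> 'g"
    assume th: "\<theta> \<in> Ffilt G M (Suc k)"
      and c: "gs 0 = \<one>\<^bsub>G\<^esub> \<and> (\<forall>j<2 ^ s. gs j \<in> carrier G) \<and>
              inj_on (\<lambda>j. hatpi G #>\<^bsub>G\<^esub> gs j) {..<2 ^ s} \<and>
              (\<lambda>j. hatpi G #>\<^bsub>G\<^esub> gs j) ` {..<2 ^ s} = rcosets\<^bsub>G\<^esub> (hatpi G)"
    interpret L3b G sc M s gs
      using c assms(4) by unfold_locales auto
    show "let \<Theta> = (\<lambda>\<rho>. sc (1 / 2 ^ s)
                          (\<Sum>j<2 ^ s. sc (sgnZ2 (\<rho> (gs j))) (M (gs j) \<theta>)))
               in \<theta> = (\<Sum>\<rho>\<in>dualH G. \<Theta> \<rho>) \<and>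
                  (\<forall>\<rho>\<in>dualH G. \<forall>g\<in>carrier G. VarTw sc M \<rho> g (\<Theta> \<rho>) \<in> Ffilt G M k)"
      unfolding Let_def using partB1[of \<theta>] partB2[OF th] by blast
  qed
  have P1: "Ffilt G M (Suc k) =
           {\<theta>. \<exists>\<Theta> :: ('g \<Rightarrow> bool) \<Rightarrow> 'v.
                  \<theta> = (\<Sum>\<rho>\<in>dualH G. \<Theta> \<rho>) \<and>
                  (\<forall>\<rho>\<in>dualH G. \<forall>g\<in>carrier G. VarTw sc M \<rho> g (\<Theta> \<rho>) \<in> Ffilt G M k)}"
  proof (rule equalityI; rule subsetI)
    fix \<theta> assume th: "\<theta> \<in> Ffilt G M (Suc k)"
    obtain gs :: "nat \<Rightarrow> 'g" where gs: "gs 0 = \<one>\<^bsub>G\<^esub> \<and> (\<forall>j<2 ^ s. gs j \<in> carrier G) \<and>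
              inj_on (\<lambda>j. hatpi G #>\<^bsub>G\<^esub> gs j) {..<2 ^ s} \<and>
              (\<lambda>j. hatpi G #>\<^bsub>G\<^esub> gs j) ` {..<2 ^ s} = rcosets\<^bsub>G\<^esub> (hatpi G)"
      using exists_gs[OF assms(4,5)] by blast
    have "let \<Theta> = (\<lambda>\<rho>. sc (1 / 2 ^ s)
                          (\<Sum>j<2 ^ s. sc (sgnZ2 (\<rho> (gs j))) (M (gs j) \<theta>)))
               in \<theta> = (\<Sum>\<rho>\<in>dualH G. \<Theta> \<rho>) \<and>
                  (\<forall>\<rho>\<in>dualH G. \<forall>g\<in>carrier G. VarTw sc M \<rho> g (\<Theta> \<rho>) \<in> Ffilt G M k)"
      using P2 th gs by blast
    thus "\<theta> \<in> {\<theta>. \<exists>\<Theta> :: ('g \<Rightarrow> bool) \<Rightarrow> 'v.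
                  \<theta> = (\<Sum>\<rho>\<in>dualH G. \<Theta> \<rho>) \<and>
                  (\<forall>\<rho>\<in>dualH G. \<forall>g\<in>carrier G. VarTw sc M \<rho> g (\<Theta> \<rho>) \<in> Ffilt G M k)}"
      unfolding Let_def by blast
  next
    fix \<theta> assume "\<theta> \<in> {\<theta>. \<exists>\<Theta> :: ('g \<Rightarrow> bool) \<Rightarrow> 'v.
                  \<theta> = (\<Sum>\<rho>\<in>dualH G. \<Theta> \<rho>) \<and>
                  (\<forall>\<rho>\<in>dualH G. \<forall>g\<in>carrier G. VarTw sc M \<rho> g (\<Theta> \<rho>) \<in> Ffilt G M k)}"
    then obtain \<Theta> where "\<theta> = (\<Sum>\<rho>\<in>dualH G. \<Theta> \<rho>)"
      "\<forall>\<rho>\<in>dualH G. \<forall>g\<in>carrier G. VarTw sc M \<rho> g (\<Theta> \<rho>) \<in> Ffilt G M k" by blast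
    thus "\<theta> \<in> Ffilt G M (Suc k)" by (rule partA)
  qed
  show ?thesis using P1 P2 by blast
qed

end
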